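(* Let $n\ge 2$, $c>0$ and $\alpha>0$ be such that the fractional Hadamard power $H^{\circ\alpha}$ of the $n\times n$ generalized Hilbert matrix $H=\left(\frac{1}{i+j-2+c}\right)_{i,j=1}^n$ is positive definite. For $m\ge 2$, let $\mathcal{A}=(a_{i_1\dots i_m})$ be the $m$th order $n$-dimensional generalized Hilbert tensor $a_{i_1\dots i_m}=\frac{1}{i_1+\dots+i_m-m+c}$. Then $\mathcal{A}^{\circ\alpha}$ is strongly completely positive, and if $m$ is even then $\mathcal{A}^{\circ\alpha}$ is positive definite.
   Context: For a nonnegative tensor $\mathcal{A}=(a_{i_1\dots i_m})$ and $\alpha>0$, its fractional Hadamard power is $\mathcal{A}^{\circ\alpha}=(a_{i_1\dots i_m}^{\alpha})$. A symmetric tensor of order $m$, dimension $n$ is strongly completely positive if it equals $\sum_{k=1}^r(\mathbf{u}^{(k)})^m$ for nonnegative vectors $\mathbf{u}^{(k)}\in\mathbb{R}^n$ spanning $\mathbb{R}^n$, where $\mathbf{u}^m$ has entries $u_{i_1}\cdots u_{i_m}$. For even $m$, a symmetric tensor $(b_{i_1\dots i_m})$ is positive definite if $\sum b_{i_1\dots i_m}x_{i_1}\cdots x_{i_m}>0$ for all nonzero $\mathbf{x}\in\mathbb{R}^n$. *)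

theory Defs
  imports Complex_Main "HOL-Library.Multiset"
begin

text \<open>Conventions: indices are 0-based, so an index i ranges over {0..<n}
 (paper index i+1). A vector in R^n is a function x :: nat => real, of which
 only the values x 0, ..., x (n-1) matter. An order-m, dimension-n tensor is a
 function on index lists of length m with entries < n.\<close>

definition tensor_indices :: "nat \<Rightarrow> nat \<Rightarrow> nat list set" where
  "tensor_indices m n = {is. length is = m \<and> (\<forall>i\<in>set is. i < n)}"

text \<open>Generalized Hilbert matrix H = (1/(i+j-2+c)), 1-based; 0-based: 1/(i+j+c).\<close>
definition gen_hilbert_matrix :: "real \<Rightarrow> nat \<Rightarrow> nat \<Rightarrow> real" where
  "gen_hilbert_matrix c i j = 1 / (real i + real j + c)"

text \<open>Generalized Hilbert tensor a = 1/(i_1+...+i_m - m + c), 1-based;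
 0-based: 1/(i_1+...+i_m + c).\<close>
definition gen_hilbert_tensor :: "real \<Rightarrow> nat list \<Rightarrow> real" where
  "gen_hilbert_tensor c is = 1 / (real (sum_list is) + c)"

definition hadamard_pow_matrix :: "(nat \<Rightarrow> nat \<Rightarrow> real) \<Rightarrow> real \<Rightarrow> nat \<Rightarrow> nat \<Rightarrow> real" where
  "hadamard_pow_matrix H \<alpha> i j = H i j powr \<alpha>"

definition hadamard_pow_tensor :: "(nat list \<Rightarrow> real) \<Rightarrow> real \<Rightarrow> nat list \<Rightarrow> real" where
  "hadamard_pow_tensor A \<alpha> is = A is powr \<alpha>"

definition pos_def_matrix :: "nat \<Rightarrow> (nat \<Rightarrow> nat \<Rightarrow> real) \<Rightarrow> bool" where
  "pos_def_matrix n B \<longleftrightarrow>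
     (\<forall>i<n. \<forall>j<n. B i j = B j i) \<and>
     (\<forall>x::nat \<Rightarrow> real. (\<exists>i<n. x i \<noteq> 0) \<longrightarrow>
        (\<Sum>i<n. \<Sum>j<n. B i j * x i * x j) > 0)"

definition symmetric_tensor :: "nat \<Rightarrow> nat \<Rightarrow> (nat list \<Rightarrow> real) \<Rightarrow> bool" where
  "symmetric_tensor m n A \<longleftrightarrow>
     (\<forall>is\<in>tensor_indices m n. \<forall>js. mset js = mset is \<longrightarrow> A js = A is)"

definition tensor_power_vec :: "(nat \<Rightarrow> real) \<Rightarrow> nat list \<Rightarrow> real" where
  "tensor_power_vec u is = prod_list (map u is)"

definition strongly_completely_positive :: "nat \<Rightarrow> nat \<Rightarrow> (nat list \<Rightarrow> real) \<Rightarrow> bool" where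
  "strongly_completely_positive m n A \<longleftrightarrow>
     symmetric_tensor m n A \<and>
     (\<exists>(r::nat) (u::nat \<Rightarrow> nat \<Rightarrow> real).
        (\<forall>k<r. \<forall>i<n. u k i \<ge> 0) \<and>
        (\<forall>x::nat \<Rightarrow> real. \<exists>t::nat \<Rightarrow> real. \<forall>i<n. x i = (\<Sum>k<r. t k * u k i)) \<and>
        (\<forall>is\<in>tensor_indices m n. A is = (\<Sum>k<r. tensor_power_vec (u k) is)))"

definition pos_def_tensor :: "nat \<Rightarrow> nat \<Rightarrow> (nat list \<Rightarrow> real) \<Rightarrow> bool" where
  "pos_def_tensor m n B \<longleftrightarrow>
     symmetric_tensor m n B \<and>
     (\<forall>x::nat \<Rightarrow> real. (\<exists>i<n. x i \<noteq> 0) \<longrightarrow>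
        (\<Sum>is\<in>tensor_indices m n. B is * prod_list (map x is)) > 0)"

end

theory Submission
  imports Defs
begin
fun EE :: "real \<Rightarrow> nat \<Rightarrow> real \<Rightarrow> real \<Rightarrow> real" where
  "EE c 0 b x = (x + c) powr (-b)"
| "EE c (Suc k) b x = EE c k b x - EE c k b (x + 1)"

lemma EE_deriv: "x > -c \<Longrightarrow> ((EE c k b) has_real_derivative (-b * EE c k (b+1) x)) (at x)"
proof (induction k arbitrary: x)
  case 0
  have "((\<lambda>x. (x + c) powr (-b)) has_real_derivative (-b) * (x+c) powr (-b - 1) * 1) (at x)"
    using 0 by (intro DERIV_chain2[OF has_real_derivative_powr] derivative_eq_intros) auto
  moreover have e1: "EE c 0 b = (\<lambda>x. (x + c) powr (-b))" by (rule ext) simp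
  moreover have e2: "-b * EE c 0 (b+1) x = (-b) * (x+c) powr (-b - 1) * 1" by (simp add: minus_add_distrib)
  ultimately show ?case by (simp only: e1 e2)
next
  case (Suc k)
  have d1: "((EE c k b) has_real_derivative (-b * EE c k (b+1) x)) (at x)" using Suc by auto
  have "((EE c k b) has_real_derivative (-b * EE c k (b+1) (x+1))) (at (x+1))" using Suc.IH[of "x+1"] Suc.prems by auto
  then have d2: "((\<lambda>y. EE c k b (y+1)) has_real_derivative (-b * EE c k (b+1) (x+1))) (at x)"
    using DERIV_shift by blast
  have "((\<lambda>y. EE c k b y - EE c k b (y+1)) has_real_derivative (-b * EE c k (b+1) x - (-b * EE c k (b+1) (x+1)))) (at x)"
    by (rule DERIV_diff[OF d1 d2])
  moreover have "(\<lambda>y. EE c k b y - EE c k b (y+1)) = EE c (Suc k) b" by auto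
  ultimately show ?case by (simp add: algebra_simps)
qed

lemma EE_nonneg: "b > 0 \<Longrightarrow> x > -c \<Longrightarrow> EE c k b x \<ge> 0"
proof (induction k arbitrary: b x)
  case 0
  then show ?case by simp
next
  case (Suc k)
  have "EE c k b (x+1) \<le> EE c k b x"
  proof (rule DERIV_nonpos_imp_nonincreasing[of x "x+1" "EE c k b"])
    fix y assume "x \<le> y" "y \<le> x + 1"
    then have "y > -c" using Suc by auto
    then show "\<exists>d. DERIV (EE c k b) y :> d \<and> d \<le> 0"
      using EE_deriv[of c y k b] Suc.IH[of "b+1" y] Suc.prems
      by (intro exI[of _ "-b * EE c k (b+1) y"]) (auto simp: mult_nonneg_nonneg)
  qed auto
  then show ?case by simp
qed

lemma newton_abstract:
  fixes g :: "nat \<Rightarrow> nat \<Rightarrow> real"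
  assumes rec: "\<And>k t. g k t = g (Suc k) t + g k (Suc t)"
  shows "g 0 s = (\<Sum>i\<le>L. real (L choose i) * g (L - i) (s + i))"
proof (induction L)
  case 0
  then show ?case by simp
next
  case (Suc L)
  have A: "(\<Sum>i\<le>L. real (L choose i) * g (L - i) (s + i))
      = (\<Sum>i\<le>L. real (L choose i) * g (Suc L - i) (s + i)) + (\<Sum>i\<le>L. real (L choose i) * g (L - i) (Suc (s + i)))"
  proof -
    have "\<And>i. i \<le> L \<Longrightarrow> g (L - i) (s + i) = g (Suc L - i) (s + i) + g (L - i) (Suc (s + i))"
    proof -
      fix i assume i: "i \<le> L"
      have "Suc L - i = Suc (L - i)" using i by (simp add: Suc_diff_le)
      then show "g (L - i) (s + i) = g (Suc L - i) (s + i) + g (L - i) (Suc (s + i))"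
        using rec[of "L - i" "s + i"] by simp
    qed
    then show ?thesis by (simp add: sum.distrib[symmetric] algebra_simps)
  qed
  have B: "(\<Sum>i\<le>L. real (L choose i) * g (Suc L - i) (s + i))
     = g (Suc L) s + (\<Sum>i\<le>L. real (L choose (Suc i)) * g (L - i) (s + Suc i))"
  proof -
    let ?F = "\<lambda>i. real (L choose i) * g (Suc L - i) (s + i)"
    have "(\<Sum>i\<le>L. ?F i) = (\<Sum>i\<le>Suc L. ?F i)" by (simp add: sum.atMost_Suc)
    also have "\<dots> = ?F 0 + (\<Sum>i\<le>L. ?F (Suc i))" by (rule sum.atMost_Suc_shift)
    finally show ?thesis by simp
  qed
  have C: "(\<Sum>i\<le>Suc L. real (Suc L choose i) * g (Suc L - i) (s + i))
     = g (Suc L) s + (\<Sum>i\<le>L. real (Suc L choose Suc i) * g (L - i) (s + Suc i))"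
    by (subst sum.atMost_Suc_shift) simp
  have D: "(\<Sum>i\<le>L. real (Suc L choose Suc i) * g (L - i) (s + Suc i))
     = (\<Sum>i\<le>L. real (L choose (Suc i)) * g (L - i) (s + Suc i)) + (\<Sum>i\<le>L. real (L choose i) * g (L - i) (Suc (s + i)))"
    by (simp add: sum.distrib[symmetric] algebra_simps)
  show ?case using Suc A B C D by simp
qed

definition phi :: "nat \<Rightarrow> nat \<Rightarrow> nat \<Rightarrow> real" where
  "phi M j s = (\<Prod>i<s. (real j - real i) / (real M - real i))"

lemma choose_prod: "real (n choose k) = (\<Prod>i<k. real n - real i) / fact k"
  by (simp add: binomial_gbinomial gbinomial_prod_rev atLeast0LessThan)

lemma binom_phi:
  assumes "s \<le> j" "j \<le> M"
  shows "real ((M - s) choose (j - s)) = real (M choose j) * phi M j s"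
proof -
  have e: "real (M choose j) * real (j choose s) = real (M choose s) * real ((M - s) choose (j - s))"
    using choose_mult[OF assms] by (metis of_nat_mult)
  have nz: "(\<Prod>i<s. real M - real i) \<noteq> 0" using assms by (auto simp: prod_zero_iff)
  have ph: "phi M j s * (\<Prod>i<s. real M - real i) = (\<Prod>i<s. real j - real i)"
    unfolding phi_def using nz by (simp add: prod_dividef)
  have cj: "fact s * real (j choose s) = (\<Prod>i<s. real j - real i)" by (simp add: choose_prod)
  have cM: "fact s * real (M choose s) = (\<Prod>i<s. real M - real i)" by (simp add: choose_prod)
  have "(\<Prod>i<s. real M - real i) * real ((M - s) choose (j - s))
     = fact s * (real (M choose s) * real ((M - s) choose (j - s)))" using cM by simp
  also have "\<dots> = fact s * (real (M choose j) * real (j choose s))" using e by simp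
  also have "\<dots> = real (M choose j) * (\<Prod>i<s. real j - real i)" using cj by (simp add: algebra_simps)
  also have "\<dots> = (\<Prod>i<s. real M - real i) * (real (M choose j) * phi M j s)" using ph by (simp add: algebra_simps)
  finally have "(\<Prod>i<s. real M - real i) * real ((M - s) choose (j - s))
     = (\<Prod>i<s. real M - real i) * (real (M choose j) * phi M j s)" .
  then show ?thesis using nz by simp
qed

lemma phi_zero: "j < s \<Longrightarrow> phi M j s = 0"
  unfolding phi_def by (auto simp: prod_zero_iff intro!: bexI[of _ j])

lemma phi_0: "phi M j 0 = 1" by (simp add: phi_def)

lemma newton_repr:
  assumes "s \<le> M"
  shows "EE c 0 b (real s) = (\<Sum>j\<le>M. real (M choose j) * EE c (M - j) b (real j) * phi M j s)"
proof -
  let ?g = "\<lambda>k t. EE c k b (real t)"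
  have rec: "\<And>k t. ?g k t = ?g (Suc k) t + ?g k (Suc t)" by (simp add: add.commute)
  have "EE c 0 b (real s) = (\<Sum>i\<le>M - s. real ((M - s) choose i) * ?g (M - s - i) (s + i))"
    using newton_abstract[of ?g s "M - s", OF rec] by simp
  also have "\<dots> = (\<Sum>j\<in>{s..M}. real ((M - s) choose (j - s)) * ?g (M - j) j)"
  proof -
    have "(\<Sum>j\<in>{s..M}. real ((M - s) choose (j - s)) * ?g (M - j) j)
        = (\<Sum>i\<in>{0..M - s}. real ((M - s) choose (i + s - s)) * ?g (M - (i + s)) (i + s))"
      using assms sum.shift_bounds_cl_nat_ivl[of "\<lambda>j. real ((M - s) choose (j - s)) * ?g (M - j) j" 0 s "M - s"] by simp
    also have "\<dots> = (\<Sum>i\<le>M - s. real ((M - s) choose i) * ?g (M - s - i) (s + i))"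
      by (simp add: atLeast0AtMost add.commute diff_diff_add)
    finally show ?thesis by simp
  qed
  also have "\<dots> = (\<Sum>j\<in>{s..M}. real (M choose j) * ?g (M - j) j * phi M j s)"
    by (intro sum.cong refl) (simp add: binom_phi)
  also have "\<dots> = (\<Sum>j\<le>M. real (M choose j) * ?g (M - j) j * phi M j s)"
  proof (rule sum.mono_neutral_left)
    show "\<forall>i\<in>{..M} - {s..M}. real (M choose i) * ?g (M - i) i * phi M i s = 0"
      by (auto simp: phi_zero)
  qed auto
  finally show ?thesis by simp
qed

lemma prod_diff_le:
  fixes a b :: "nat \<Rightarrow> real"
  assumes "\<And>i. i < s \<Longrightarrow> \<bar>a i\<bar> \<le> 1" "\<And>i. i < s \<Longrightarrow> \<bar>b i\<bar> \<le> 1"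
  shows "\<bar>(\<Prod>i<s. a i) - (\<Prod>i<s. b i)\<bar> \<le> (\<Sum>i<s. \<bar>a i - b i\<bar>)"
  using assms
proof (induction s)
  case 0
  then show ?case by simp
next
  case (Suc s)
  have IH: "\<bar>(\<Prod>i<s. a i) - (\<Prod>i<s. b i)\<bar> \<le> (\<Sum>i<s. \<bar>a i - b i\<bar>)" using Suc by auto
  have pb: "\<bar>\<Prod>i<s. b i\<bar> \<le> 1"
    unfolding abs_prod using Suc.prems(2) by (intro prod_le_1) auto
  have as: "\<bar>a s\<bar> \<le> 1" using Suc.prems by auto
  have "(\<Prod>i<Suc s. a i) - (\<Prod>i<Suc s. b i) = ((\<Prod>i<s. a i) - (\<Prod>i<s. b i)) * a s + (\<Prod>i<s. b i) * (a s - b s)"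
    by (simp add: algebra_simps)
  then have "\<bar>(\<Prod>i<Suc s. a i) - (\<Prod>i<Suc s. b i)\<bar> \<le> \<bar>(\<Prod>i<s. a i) - (\<Prod>i<s. b i)\<bar> * \<bar>a s\<bar> + \<bar>\<Prod>i<s. b i\<bar> * \<bar>a s - b s\<bar>"
    by (metis abs_mult abs_triangle_ineq)
  also have "\<dots> \<le> \<bar>(\<Prod>i<s. a i) - (\<Prod>i<s. b i)\<bar> * 1 + 1 * \<bar>a s - b s\<bar>"
    using as pb by (intro add_mono mult_mono) auto
  also have "\<dots> \<le> (\<Sum>i<Suc s. \<bar>a i - b i\<bar>)" using IH by simp
  finally show ?case .
qed

lemma factor_bounds:
  fixes M N i j :: nat
  assumes "2 * N \<le> M" "i < N" "j \<le> M"
  shows "\<bar>(real j - real i) / (real M - real i)\<bar> \<le> 1"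
    and "\<bar>(real j - real i) / (real M - real i) - real j / real M\<bar> \<le> 2 * real N / real M"
proof -
  have Mi: "real M - real i > 0" using assms by linarith
  have M0: "real M > 0" using assms by linarith
  have "\<bar>real j - real i\<bar> \<le> real M - real i" using assms by linarith
  moreover have "\<bar>(real j - real i) / (real M - real i)\<bar> = \<bar>real j - real i\<bar> / (real M - real i)"
    using Mi by (simp add: abs_divide)
  ultimately show "\<bar>(real j - real i) / (real M - real i)\<bar> \<le> 1" using Mi by simp
  have eq: "(real j - real i) / (real M - real i) - real j / real M = real i * (real j - real M) / (real M * (real M - real i))"
    using Mi M0 by (simp add: field_simps)
  have "\<bar>real i * (real j - real M)\<bar> = real i * (real M - real j)" using assms by (simp add: abs_mult)
  also have "\<dots> \<le> real i * real M" by (simp add: mult_left_mono)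
  finally have n1: "\<bar>real i * (real j - real M)\<bar> \<le> real i * real M" .
  have n2: "real i * real M * real M \<le> 2 * real N * (real M * (real M - real i))"
  proof -
    have "real i * real M \<le> real N * real M" using assms M0 by (intro mult_right_mono) auto
    moreover have "real i * (2 * real N) \<le> real N * real M"
    proof -
      have "real i * (2 * real N) \<le> real N * (2 * real N)" using assms by (intro mult_right_mono) auto
      also have "\<dots> \<le> real N * real M" using assms by (intro mult_left_mono) auto
      finally show ?thesis .
    qed
    ultimately have "real i * real M + real i * (2 * real N) \<le> 2 * real N * real M" by linarith
    then have "real M * (real i * real M) \<le> real M * (2 * real N * (real M - real i))"
      using M0 by (intro mult_left_mono) (auto simp: algebra_simps)
    then show ?thesis by (simp add: algebra_simps)
  qed
  have "\<bar>real i * (real j - real M) / (real M * (real M - real i))\<bar>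
      = \<bar>real i * (real j - real M)\<bar> / (real M * (real M - real i))"
    using Mi M0 by (simp only: abs_divide abs_of_pos[OF mult_pos_pos[OF M0 Mi]])
  also have "\<dots> \<le> real i * real M / (real M * (real M - real i))"
    using n1 Mi M0 by (intro divide_right_mono) auto
  also have "\<dots> \<le> 2 * real N / real M"
    using n2 Mi M0 by (simp add: divide_simps)
  finally show "\<bar>(real j - real i) / (real M - real i) - real j / real M\<bar> \<le> 2 * real N / real M"
    using eq by simp
qed

lemma phi_approx:
  assumes "2 * N \<le> M" "s \<le> N" "j \<le> M"
  shows "\<bar>phi M j s - (real j / real M) ^ s\<bar> \<le> 2 * real N * real N / real M"
proof -
  have "\<bar>phi M j s - (real j / real M) ^ s\<bar>
     = \<bar>(\<Prod>i<s. (real j - real i) / (real M - real i)) - (\<Prod>i<s. real j / real M)\<bar>"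
    by (simp add: phi_def)
  also have "\<dots> \<le> (\<Sum>i<s. \<bar>(real j - real i) / (real M - real i) - real j / real M\<bar>)"
  proof (rule prod_diff_le)
    fix i assume "i < s"
    then show "\<bar>(real j - real i) / (real M - real i)\<bar> \<le> 1" using factor_bounds(1)[of N M i j] assms by auto
    show "\<bar>real j / real M\<bar> \<le> 1" using assms by (auto simp: divide_le_eq_1)
  qed
  also have "\<dots> \<le> (\<Sum>i<s. 2 * real N / real M)"
    using factor_bounds(2)[of N M _ j] assms by (intro sum_mono) auto
  also have "\<dots> = real s * (2 * real N / real M)" by simp
  also have "\<dots> \<le> real N * (2 * real N / real M)" using assms by (intro mult_right_mono) auto
  also have "\<dots> = 2 * real N * real N / real M" by simp
  finally show ?thesis .
qed

definition lam :: "real \<Rightarrow> real \<Rightarrow> nat \<Rightarrow> nat \<Rightarrow> real" where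
  "lam c b M j = real (M choose j) * EE c (M - j) b (real j)"

lemma lam_nonneg: "c > 0 \<Longrightarrow> b > 0 \<Longrightarrow> lam c b M j \<ge> 0"
  unfolding lam_def using EE_nonneg[where c=c and x="real j" and b=b and k="M-j"] by auto

lemma approx_main:
  assumes "c > 0" "b > 0" "2 * N \<le> M" "s \<le> N"
  shows "\<bar>EE c 0 b (real s) - (\<Sum>j\<le>M. lam c b M j * (real j / real M) ^ s)\<bar>
          \<le> EE c 0 b 0 * (2 * real N * real N / real M)"
proof -
  have sM: "s \<le> M" using assms by auto
  have r: "EE c 0 b (real s) = (\<Sum>j\<le>M. lam c b M j * phi M j s)"
    using newton_repr[OF sM, of c b] by (simp add: lam_def)
  have r0: "EE c 0 b 0 = (\<Sum>j\<le>M. lam c b M j)"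
    using newton_repr[of 0 M c b] by (simp add: lam_def phi_0)
  have "\<bar>EE c 0 b (real s) - (\<Sum>j\<le>M. lam c b M j * (real j / real M) ^ s)\<bar>
      = \<bar>\<Sum>j\<le>M. lam c b M j * (phi M j s - (real j / real M) ^ s)\<bar>"
    unfolding r by (simp add: sum_subtractf algebra_simps)
  also have "\<dots> \<le> (\<Sum>j\<le>M. \<bar>lam c b M j * (phi M j s - (real j / real M) ^ s)\<bar>)"
    by (rule sum_abs)
  also have "\<dots> \<le> (\<Sum>j\<le>M. lam c b M j * (2 * real N * real N / real M))"
  proof (rule sum_mono)
    fix j assume "j \<in> {..M}"
    then show "\<bar>lam c b M j * (phi M j s - (real j / real M) ^ s)\<bar> \<le> lam c b M j * (2 * real N * real N / real M)"
      using mult_left_mono[OF phi_approx[OF assms(3,4), of j] lam_nonneg[OF assms(1,2), of M j]]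
        lam_nonneg[OF assms(1,2), of M j]
      by (simp add: abs_mult)
  qed
  also have "\<dots> = EE c 0 b 0 * (2 * real N * real N / real M)"
    unfolding r0 by (simp add: sum_distrib_right sum_divide_distrib)
  finally show ?thesis .
qed

lemma lin_dep:
  fixes a :: "'a \<Rightarrow> nat \<Rightarrow> real"
  assumes "finite J" "card J > D"
  shows "\<exists>c. (\<exists>j\<in>J. c j \<noteq> 0) \<and> (\<forall>s<D. (\<Sum>j\<in>J. c j * a j s) = 0)"
  using assms
proof (induction D arbitrary: J a)
  case 0
  then have "J \<noteq> {}" by auto
  then show ?case by (intro exI[of _ "\<lambda>_. 1"]) auto
next
  case (Suc D)
  show ?case
  proof (cases "\<forall>j\<in>J. a j D = 0")
    case True
    obtain c where c: "\<exists>j\<in>J. c j \<noteq> 0" "\<forall>s<D. (\<Sum>j\<in>J. c j * a j s) = 0"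
      using Suc.IH[of J a] Suc.prems by auto
    have "\<forall>s<Suc D. (\<Sum>j\<in>J. c j * a j s) = 0"
    proof (intro allI impI)
      fix s assume "s < Suc D"
      then show "(\<Sum>j\<in>J. c j * a j s) = 0" using c True by (cases "s = D") auto
    qed
    then show ?thesis using c by blast
  next
    case False
    then obtain j0 where j0: "j0 \<in> J" "a j0 D \<noteq> 0" by auto
    define b where "b = (\<lambda>j s. a j s - (a j D / a j0 D) * a j0 s)"
    define J' where "J' = J - {j0}"
    have fJ': "finite J'" using Suc.prems unfolding J'_def by auto
    have cJ': "card J' > D" using Suc.prems j0 unfolding J'_def by (simp add: card_Diff_singleton)
    obtain c' where c': "\<exists>j\<in>J'. c' j \<noteq> 0" "\<forall>s<D. (\<Sum>j\<in>J'. c' j * b j s) = 0"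
      using Suc.IH[OF fJ' cJ', of b] by auto
    have c'': "\<forall>s<Suc D. (\<Sum>j\<in>J'. c' j * b j s) = 0"
    proof (intro allI impI)
      fix s assume "s < Suc D"
      moreover have "(\<Sum>j\<in>J'. c' j * b j D) = 0" using j0 by (simp add: b_def)
      ultimately show "(\<Sum>j\<in>J'. c' j * b j s) = 0" using c' by (cases "s = D") auto
    qed
    define S where "S = (\<Sum>j\<in>J'. c' j * a j D)"
    define c where "c = (\<lambda>j. if j = j0 then - S / a j0 D else c' j)"
    have "\<forall>s<Suc D. (\<Sum>j\<in>J. c j * a j s) = 0"
    proof (intro allI impI)
      fix s assume s: "s < Suc D"
      have J: "J = insert j0 J'" using j0 unfolding J'_def by auto
      have "(\<Sum>j\<in>J. c j * a j s) = c j0 * a j0 s + (\<Sum>j\<in>J'. c j * a j s)"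
        using sum.remove[OF Suc.prems(1) j0(1), of "\<lambda>j. c j * a j s"] unfolding J'_def by simp
      also have "(\<Sum>j\<in>J'. c j * a j s) = (\<Sum>j\<in>J'. c' j * a j s)"
        by (intro sum.cong) (auto simp: c_def J'_def)
      also have "(\<Sum>j\<in>J'. c' j * a j s) = (\<Sum>j\<in>J'. c' j * b j s) + S / a j0 D * a j0 s"
        unfolding b_def S_def by (simp add: algebra_simps sum_subtractf sum_distrib_left sum_divide_distrib sum_distrib_right)
      finally show "(\<Sum>j\<in>J. c j * a j s) = 0" using c'' s by (simp add: c_def)
    qed
    moreover have "\<exists>j\<in>J. c j \<noteq> 0" using c' by (auto simp: c_def J'_def)
    ultimately show ?thesis by blast
  qed
qed

lemma caratheodory_fin:
  fixes a :: "'a \<Rightarrow> nat \<Rightarrow> real"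
  assumes "finite J" "\<forall>j\<in>J. l j \<ge> 0"
  shows "\<exists>J' \<mu>. J' \<subseteq> J \<and> card J' \<le> D \<and> (\<forall>j\<in>J'. \<mu> j \<ge> 0) \<and>
     (\<forall>s<D. (\<Sum>j\<in>J. l j * a j s) = (\<Sum>j\<in>J'. \<mu> j * a j s))"
  using assms
proof (induction "card J" arbitrary: J l rule: less_induct)
  case less
  show ?case
  proof (cases "card J \<le> D")
    case True
    then show ?thesis using less.prems by blast
  next
    case False
    obtain c0 where c0: "\<exists>j\<in>J. c0 j \<noteq> 0" "\<forall>s<D. (\<Sum>j\<in>J. c0 j * a j s) = 0"
      using lin_dep[OF less.prems(1), of D a] False by auto
    obtain c where c: "\<exists>j\<in>J. c j > 0" "\<forall>s<D. (\<Sum>j\<in>J. c j * a j s) = 0"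
    proof (cases "\<exists>j\<in>J. c0 j > 0")
      case True
      then show ?thesis using that c0 by blast
    next
      case False
      then have "\<exists>j\<in>J. - c0 j > 0" using c0 by force
      moreover have "\<forall>s<D. (\<Sum>j\<in>J. (- c0 j) * a j s) = 0" using c0
        by (simp add: sum_negf)
      ultimately show ?thesis using that[of "\<lambda>j. - c0 j"] by auto
    qed
    define P where "P = {j\<in>J. c j > 0}"
    have fP: "finite P" "P \<noteq> {}" using c less.prems unfolding P_def by auto
    define th where "th = Min ((\<lambda>j. l j / c j) ` P)"
    have "th \<in> (\<lambda>j. l j / c j) ` P" unfolding th_def using fP by (intro Min_in) auto
    then obtain js where js: "js \<in> P" "l js / c js = th" by force
    have thle: "\<And>j. j \<in> P \<Longrightarrow> th \<le> l j / c j" unfolding th_def using fP by auto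
    have th0: "th \<ge> 0" using js less.prems unfolding P_def by auto
    define l' where "l' = (\<lambda>j. l j - th * c j)"
    have l'0: "\<forall>j\<in>J. l' j \<ge> 0"
    proof
      fix j assume j: "j \<in> J"
      show "l' j \<ge> 0"
      proof (cases "c j > 0")
        case True
        then have "th \<le> l j / c j" using thle j unfolding P_def by auto
        then have "th * c j \<le> l j" using True by (simp add: pos_le_divide_eq)
        then show ?thesis unfolding l'_def by simp
      next
        case False
        then have "th * c j \<le> 0" using th0 by (simp add: mult_nonneg_nonpos)
        moreover have "l j \<ge> 0" using less.prems(2) j by blast
        ultimately show ?thesis unfolding l'_def by simp
      qed
    qed
    have l'js: "l' js = 0" using js unfolding l'_def P_def by auto
    have jsJ: "js \<in> J" using js unfolding P_def by auto
    have eq1: "\<forall>s<D. (\<Sum>j\<in>J. l j * a j s) = (\<Sum>j\<in>J - {js}. l' j * a j s)"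
    proof (intro allI impI)
      fix s assume s: "s < D"
      have "(\<Sum>j\<in>J. l' j * a j s) = (\<Sum>j\<in>J. l j * a j s) - th * (\<Sum>j\<in>J. c j * a j s)"
        unfolding l'_def by (simp add: algebra_simps sum_subtractf sum_distrib_left)
      then have "(\<Sum>j\<in>J. l j * a j s) = (\<Sum>j\<in>J. l' j * a j s)" using c s by simp
      also have "\<dots> = (\<Sum>j\<in>J - {js}. l' j * a j s)"
        using l'js jsJ less.prems by (simp add: sum.remove)
      finally show "(\<Sum>j\<in>J. l j * a j s) = (\<Sum>j\<in>J - {js}. l' j * a j s)" .
    qed
    have "card (J - {js}) < card J" by (rule card_Diff1_less[OF less.prems(1) jsJ])
    then obtain J' \<mu> where J': "J' \<subseteq> J - {js}" "card J' \<le> D" "\<forall>j\<in>J'. \<mu> j \<ge> 0"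
       "\<forall>s<D. (\<Sum>j\<in>J - {js}. l' j * a j s) = (\<Sum>j\<in>J'. \<mu> j * a j s)"
      using less.hyps[of "J - {js}" l'] less.prems l'0 by auto
    then show ?thesis using eq1 by (intro exI[of _ J'] exI[of _ \<mu>]) auto
  qed
qed

lemma caratheodory_idx:
  fixes \<tau> :: "'a \<Rightarrow> real"
  assumes "finite J" "\<forall>j\<in>J. l j \<ge> 0" "\<forall>j\<in>J. 0 \<le> \<tau> j \<and> \<tau> j \<le> 1"
  shows "\<exists>w t :: nat \<Rightarrow> real. (\<forall>k<D. w k \<ge> 0 \<and> 0 \<le> t k \<and> t k \<le> 1) \<and>
     (\<forall>s<D. (\<Sum>j\<in>J. l j * \<tau> j ^ s) = (\<Sum>k<D. w k * t k ^ s))"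
proof -
  obtain J' \<mu> where J': "J' \<subseteq> J" "card J' \<le> D" "\<forall>j\<in>J'. \<mu> j \<ge> 0"
     "\<forall>s<D. (\<Sum>j\<in>J. l j * \<tau> j ^ s) = (\<Sum>j\<in>J'. \<mu> j * \<tau> j ^ s)"
    using caratheodory_fin[OF assms(1,2), of D "\<lambda>j s. \<tau> j ^ s"] by auto
  have fJ': "finite J'" by (rule finite_subset[OF J'(1) assms(1)])
  obtain h where h: "bij_betw h {0..<card J'} J'" using ex_bij_betw_nat_finite[OF fJ'] by auto
  define w where "w = (\<lambda>k. if k < card J' then \<mu> (h k) else 0)"
  define t where "t = (\<lambda>k. if k < card J' then \<tau> (h k) else 0)"
  have hin: "\<And>k. k < card J' \<Longrightarrow> h k \<in> J'" using h by (auto simp: bij_betw_def)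
  have "\<forall>k<D. w k \<ge> 0 \<and> 0 \<le> t k \<and> t k \<le> 1"
    using hin J' assms unfolding w_def t_def by force
  moreover have "\<forall>s<D. (\<Sum>j\<in>J. l j * \<tau> j ^ s) = (\<Sum>k<D. w k * t k ^ s)"
  proof (intro allI impI)
    fix s assume s: "s < D"
    have "(\<Sum>k<D. w k * t k ^ s) = (\<Sum>k\<in>{0..<card J'}. w k * t k ^ s)"
      using J'(2) by (intro sum.mono_neutral_right) (auto simp: w_def)
    also have "\<dots> = (\<Sum>k\<in>{0..<card J'}. \<mu> (h k) * \<tau> (h k) ^ s)"
      by (intro sum.cong) (auto simp: w_def t_def)
    also have "\<dots> = (\<Sum>j\<in>J'. \<mu> j * \<tau> j ^ s)"
      using sum.reindex_bij_betw[OF h, of "\<lambda>j. \<mu> j * \<tau> j ^ s"] by simp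
    finally show "(\<Sum>j\<in>J. l j * \<tau> j ^ s) = (\<Sum>k<D. w k * t k ^ s)" using J' s by simp
  qed
  ultimately show ?thesis by blast
qed

lemma multi_subseq:
  fixes f :: "nat \<Rightarrow> nat \<Rightarrow> real"
  assumes "\<And>q j. j < D \<Longrightarrow> \<bar>f q j\<bar> \<le> B"
  shows "\<exists>r. strict_mono r \<and> (\<forall>j<D. convergent (\<lambda>q. f (r q) j))"
  using assms
proof (induction D)
  case 0
  then show ?case by (intro exI[of _ id]) (auto simp: strict_mono_def)
next
  case (Suc D)
  obtain r where r: "strict_mono r" "\<forall>j<D. convergent (\<lambda>q. f (r q) j)" using Suc by auto
  obtain r2 where r2: "strict_mono r2" "monoseq (\<lambda>q. f (r (r2 q)) D)"
    using seq_monosub[of "\<lambda>q. f (r q) D"] by auto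
  have "Bseq (\<lambda>q. f (r (r2 q)) D)" using Suc.prems by (intro BseqI'[of _ B]) auto
  then have cD: "convergent (\<lambda>q. f (r (r2 q)) D)" using r2 Bseq_monoseq_convergent by blast
  have "\<forall>j<Suc D. convergent (\<lambda>q. f ((r \<circ> r2) q) j)"
  proof (intro allI impI)
    fix j assume j: "j < Suc D"
    show "convergent (\<lambda>q. f ((r \<circ> r2) q) j)"
    proof (cases "j = D")
      case True then show ?thesis using cD by simp
    next
      case False
      then have "convergent (\<lambda>q. f (r q) j)" using r j by auto
      then obtain L where "(\<lambda>q. f (r q) j) \<longlonglongrightarrow> L" by (auto simp: convergent_def)
      then have "((\<lambda>q. f (r q) j) \<circ> r2) \<longlonglongrightarrow> L" using r2 LIMSEQ_subseq_LIMSEQ by blast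
      then show ?thesis by (auto simp: convergent_def comp_def)
    qed
  qed
  moreover have "strict_mono (r \<circ> r2)" using r r2 strict_mono_o by blast
  ultimately show ?case by blast
qed

lemma approx_D:
  assumes "c > 0" "b > 0" "2 * N \<le> M" "M > 0"
  shows "\<exists>w t :: nat \<Rightarrow> real. (\<forall>k<Suc N. w k \<ge> 0 \<and> 0 \<le> t k \<and> t k \<le> 1) \<and>
     (\<forall>s\<le>N. \<bar>EE c 0 b (real s) - (\<Sum>k<Suc N. w k * t k ^ s)\<bar> \<le> EE c 0 b 0 * (2 * real N * real N / real M))"
proof -
  obtain w t :: "nat \<Rightarrow> real" where wt: "\<forall>k<Suc N. w k \<ge> 0 \<and> 0 \<le> t k \<and> t k \<le> 1"
     "\<forall>s<Suc N. (\<Sum>j\<in>{..M}. lam c b M j * (real j / real M) ^ s) = (\<Sum>k<Suc N. w k * t k ^ s)"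
    using caratheodory_idx[of "{..M}" "lam c b M" "\<lambda>j. real j / real M" "Suc N"]
      lam_nonneg[OF assms(1,2)] assms(4) by (auto simp: divide_le_eq_1)
  show ?thesis
    using wt approx_main[OF assms(1,2,3)] by (intro exI[of _ w] exI[of _ t]) auto
qed

lemma moment_repr:
  assumes "c > 0" "b > 0"
  shows "\<exists>w t :: nat \<Rightarrow> real. (\<forall>k<Suc N. w k \<ge> 0 \<and> 0 \<le> t k \<and> t k \<le> 1) \<and>
     (\<forall>s\<le>N. EE c 0 b (real s) = (\<Sum>k<Suc N. w k * t k ^ s))"
proof -
  define h0 where "h0 = EE c 0 b 0"
  define e where "e = (\<lambda>q::nat. h0 * (2 * real N * real N) / real (q + (2 * N + 1)))"
  have "\<forall>q. \<exists>wt :: (nat \<Rightarrow> real) \<times> (nat \<Rightarrow> real). (\<forall>k<Suc N. fst wt k \<ge> 0 \<and> 0 \<le> snd wt k \<and> snd wt k \<le> 1) \<and>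
     (\<forall>s\<le>N. \<bar>EE c 0 b (real s) - (\<Sum>k<Suc N. fst wt k * snd wt k ^ s)\<bar> \<le> e q)"
  proof
    fix q
    obtain w t where "(\<forall>k<Suc N. w k \<ge> 0 \<and> 0 \<le> t k \<and> t k \<le> 1) \<and>
     (\<forall>s\<le>N. \<bar>EE c 0 b (real s) - (\<Sum>k<Suc N. w k * t k ^ s)\<bar> \<le> EE c 0 b 0 * (2 * real N * real N / real (q + (2 * N + 1))))"
      using approx_D[OF assms, of N "q + (2 * N + 1)"] by auto
    then show "\<exists>wt :: (nat \<Rightarrow> real) \<times> (nat \<Rightarrow> real). (\<forall>k<Suc N. fst wt k \<ge> 0 \<and> 0 \<le> snd wt k \<and> snd wt k \<le> 1) \<and>
     (\<forall>s\<le>N. \<bar>EE c 0 b (real s) - (\<Sum>k<Suc N. fst wt k * snd wt k ^ s)\<bar> \<le> e q)"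
      by (intro exI[of _ "(w, t)"]) (simp add: e_def h0_def)
  qed
  from choice[OF this] obtain WT where WT0: "\<forall>q. (\<forall>k<Suc N. fst (WT q) k \<ge> 0 \<and> 0 \<le> snd (WT q) k \<and> snd (WT q) k \<le> 1) \<and>
     (\<forall>s\<le>N. \<bar>EE c 0 b (real s) - (\<Sum>k<Suc N. fst (WT q) k * snd (WT q) k ^ s)\<bar> \<le> e q)"
    by blast
  have WT: "\<And>q. (\<forall>k<Suc N. fst (WT q) k \<ge> 0 \<and> 0 \<le> snd (WT q) k \<and> snd (WT q) k \<le> 1)"
     "\<And>q. (\<forall>s\<le>N. \<bar>EE c 0 b (real s) - (\<Sum>k<Suc N. fst (WT q) k * snd (WT q) k ^ s)\<bar> \<le> e q)"
    using WT0 by blast+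
  define W where "W = (\<lambda>q. fst (WT q))"
  define T where "T = (\<lambda>q. snd (WT q))"
  have h00: "h0 \<ge> 0" unfolding h0_def using EE_nonneg[of b 0 c 0] assms by auto
  have eN: "e q \<le> h0 * real N" for q
  proof -
    have "2 * real N * real N \<le> real N * real (q + (2 * N + 1))"
      by (simp add: algebra_simps)
    then have "(2 * real N * real N) / real (q + (2 * N + 1)) \<le> real N"
      by (simp add: divide_simps)
    then show ?thesis unfolding e_def using h00
      by (metis mult_left_mono times_divide_eq_right)
  qed
  have Wb: "\<bar>W q k\<bar> \<le> h0 * (1 + real N)" if k: "k < Suc N" for q k
  proof -
    have "\<bar>h0 - (\<Sum>k<Suc N. W q k)\<bar> \<le> e q" using WT(2)[of q] unfolding W_def T_def h0_def by fastforce
    then have "(\<Sum>k<Suc N. W q k) \<le> h0 * (1 + real N)" using eN[of q] by (simp add: algebra_simps)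
    moreover have "W q k \<le> (\<Sum>k<Suc N. W q k)"
      using k WT(1)[of q] unfolding W_def by (intro member_le_sum) auto
    moreover have "W q k \<ge> 0" using k WT(1)[of q] unfolding W_def by auto
    ultimately show ?thesis by simp
  qed
  define F where "F = (\<lambda>q j. if j < Suc N then W q j else T q (j - Suc N))"
  have Fb: "\<bar>F q j\<bar> \<le> h0 * (1 + real N) + 1" if "j < 2 * Suc N" for q j
  proof (cases "j < Suc N")
    case True then show ?thesis using Wb[of j q] by (simp add: F_def)
  next
    case False
    then have "j - Suc N < Suc N" using that by auto
    then have "\<bar>T q (j - Suc N)\<bar> \<le> 1" using WT(1)[of q] unfolding T_def by auto
    moreover have "h0 * (1 + real N) \<ge> 0" using h00 by simp
    ultimately show ?thesis using False by (simp add: F_def)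
  qed
  obtain r where r: "strict_mono r" "\<forall>j<2 * Suc N. convergent (\<lambda>q. F (r q) j)"
    using multi_subseq[of "2 * Suc N" F, OF Fb] by auto
  define Wl where "Wl = (\<lambda>k. lim (\<lambda>q. W (r q) k))"
  define Tl where "Tl = (\<lambda>k. lim (\<lambda>q. T (r q) k))"
  have Wc: "(\<lambda>q. W (r q) k) \<longlonglongrightarrow> Wl k" if "k < Suc N" for k
  proof -
    have "convergent (\<lambda>q. F (r q) k)" using r that by auto
    then show ?thesis using that unfolding Wl_def F_def by (simp add: convergent_LIMSEQ_iff)
  qed
  have Tc: "(\<lambda>q. T (r q) k) \<longlonglongrightarrow> Tl k" if "k < Suc N" for k
  proof -
    have "convergent (\<lambda>q. F (r q) (k + Suc N))" using r that by auto
    then show ?thesis using that unfolding Tl_def F_def by (simp add: convergent_LIMSEQ_iff)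
  qed
  have props: "\<forall>k<Suc N. Wl k \<ge> 0 \<and> 0 \<le> Tl k \<and> Tl k \<le> 1"
  proof (intro allI impI conjI)
    fix k assume k: "k < Suc N"
    show "Wl k \<ge> 0"
      by (rule tendsto_lowerbound[OF Wc[OF k]]) (use WT(1) k in \<open>auto simp: W_def\<close>)
    show "Tl k \<ge> 0"
      by (rule tendsto_lowerbound[OF Tc[OF k]]) (use WT(1) k in \<open>auto simp: T_def\<close>)
    show "Tl k \<le> 1"
      by (rule tendsto_upperbound[OF Tc[OF k]]) (use WT(1) k in \<open>auto simp: T_def\<close>)
  qed
  have e0: "e \<longlonglongrightarrow> 0"
  proof -
    have "(\<lambda>q. h0 * (2 * real N * real N) / real q) \<longlonglongrightarrow> 0" by (rule lim_const_over_n)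
    from LIMSEQ_ignore_initial_segment[OF this, of "2 * N + 1"] show ?thesis
      unfolding e_def by simp
  qed
  have "\<forall>s\<le>N. EE c 0 b (real s) = (\<Sum>k<Suc N. Wl k * Tl k ^ s)"
  proof (intro allI impI)
    fix s assume s: "s \<le> N"
    let ?g = "\<lambda>q. (\<Sum>k<Suc N. W (r q) k * T (r q) k ^ s)"
    have l1: "?g \<longlonglongrightarrow> (\<Sum>k<Suc N. Wl k * Tl k ^ s)"
      by (intro tendsto_sum tendsto_mult tendsto_power Wc Tc) auto
    have er: "(e \<circ> r) \<longlonglongrightarrow> 0" using LIMSEQ_subseq_LIMSEQ[OF e0 r(1)] .
    have L1: "(\<lambda>q. EE c 0 b (real s) - (e \<circ> r) q) \<longlonglongrightarrow> EE c 0 b (real s)"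
      using tendsto_diff[OF tendsto_const er, of "EE c 0 b (real s)"] by simp
    have L2: "(\<lambda>q. EE c 0 b (real s) + (e \<circ> r) q) \<longlonglongrightarrow> EE c 0 b (real s)"
      using tendsto_add[OF tendsto_const er, of "EE c 0 b (real s)"] by simp
    have bnd: "\<bar>EE c 0 b (real s) - ?g n\<bar> \<le> (e \<circ> r) n" for n
      using WT(2)[of "r n"] s unfolding W_def T_def by auto
    have lo: "\<forall>\<^sub>F n in sequentially. EE c 0 b (real s) - (e \<circ> r) n \<le> ?g n"
    proof (rule always_eventually, rule allI)
      fix n show "EE c 0 b (real s) - (e \<circ> r) n \<le> ?g n" using bnd[of n] by (simp add: abs_le_iff)
    qed
    have hi: "\<forall>\<^sub>F n in sequentially. ?g n \<le> EE c 0 b (real s) + (e \<circ> r) n"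
    proof (rule always_eventually, rule allI)
      fix n show "?g n \<le> EE c 0 b (real s) + (e \<circ> r) n" using bnd[of n] by (simp add: abs_le_iff)
    qed
    have l2: "?g \<longlonglongrightarrow> EE c 0 b (real s)" by (rule real_tendsto_sandwich[OF lo hi L1 L2])
    show "EE c 0 b (real s) = (\<Sum>k<Suc N. Wl k * Tl k ^ s)"
      using LIMSEQ_unique[OF l2 l1] .
  qed
  then show ?thesis using props by blast
qed

lemma prod_geom: "prod_list (map (\<lambda>i. a * t ^ i) is) = (a::real) ^ length is * t ^ sum_list is"
  by (induction "is") (auto simp: power_add algebra_simps)

lemma sum_list_bound: "(\<forall>i\<in>set is. i < n) \<Longrightarrow> sum_list is \<le> length is * (n - 1)"
  by (induction "is") auto

lemma prod_list_map_mult: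
  "prod_list (map f is) * prod_list (map g is) = prod_list (map (\<lambda>i. (f i::real) * g i) is)"
  by (induction "is") (auto simp: algebra_simps)

lemma tensor_indices_0: "tensor_indices 0 n = {[]}"
  by (auto simp: tensor_indices_def)

lemma tensor_indices_Suc:
  "tensor_indices (Suc m) n = (\<lambda>(i, is). i # is) ` ({..<n} \<times> tensor_indices m n)"
proof
  show "tensor_indices (Suc m) n \<subseteq> (\<lambda>(i, is). i # is) ` ({..<n} \<times> tensor_indices m n)"
  proof
    fix xs assume "xs \<in> tensor_indices (Suc m) n"
    then obtain i ys where "xs = i # ys" "i < n" "ys \<in> tensor_indices m n"
      unfolding tensor_indices_def by (cases xs) auto
    then show "xs \<in> (\<lambda>(i, is). i # is) ` ({..<n} \<times> tensor_indices m n)" by force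
  qed
  show "(\<lambda>(i, is). i # is) ` ({..<n} \<times> tensor_indices m n) \<subseteq> tensor_indices (Suc m) n"
    by (auto simp: tensor_indices_def)
qed

lemma finite_tensor_indices: "finite (tensor_indices m n)"
  by (induction m) (auto simp: tensor_indices_0 tensor_indices_Suc)

lemma tensor_sum:
  "(\<Sum>is\<in>tensor_indices m n. prod_list (map f is)) = (\<Sum>i<n. (f i :: real)) ^ m"
proof (induction m)
  case 0
  then show ?case by (simp add: tensor_indices_0)
next
  case (Suc m)
  have inj: "inj_on (\<lambda>(i, is). i # is) ({..<n} \<times> tensor_indices m n)"
    by (auto simp: inj_on_def)
  have "(\<Sum>is\<in>tensor_indices (Suc m) n. prod_list (map f is))
      = (\<Sum>p\<in>{..<n} \<times> tensor_indices m n. prod_list (map f ((\<lambda>(i, is). i # is) p)))"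
    unfolding tensor_indices_Suc by (rule sum.reindex[OF inj, unfolded comp_def])
  also have "\<dots> = (\<Sum>(i, ys)\<in>{..<n} \<times> tensor_indices m n. f i * prod_list (map f ys))"
    by (intro sum.cong) auto
  also have "\<dots> = (\<Sum>i<n. \<Sum>is\<in>tensor_indices m n. f i * prod_list (map f is))"
    by (rule sum.cartesian_product[symmetric])
  also have "\<dots> = (\<Sum>i<n. f i * (\<Sum>i<n. f i) ^ m)"
    by (simp add: sum_distrib_left[symmetric] Suc.IH)
  also have "\<dots> = (\<Sum>i<n. f i) ^ Suc m" by (simp add: sum_distrib_right)
  finally show ?case .
qed

lemma pd_surj:
  assumes "pos_def_matrix n P"
  shows "\<exists>y. \<forall>s<n. x s = (\<Sum>j<n. P s j * y j)"
proof -
  define a where "a = (\<lambda>j s. if j < n then P s j else x s)"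
  obtain cc where cc: "\<exists>j\<in>{..n}. cc j \<noteq> 0" "\<forall>s<n. (\<Sum>j\<in>{..n}. cc j * a j s) = 0"
    using lin_dep[of "{..n}" n a] by auto
  have split: "(\<Sum>j\<in>{..n}. cc j * a j s) = (\<Sum>j<n. cc j * P s j) + cc n * x s" for s
    by (simp add: lessThan_Suc_atMost[symmetric] a_def)
  show ?thesis
  proof (cases "cc n = 0")
    case True
    then obtain j0 where j0: "j0 < n" "cc j0 \<noteq> 0" using cc(1) by (metis atMost_iff le_neq_implies_less)
    have z: "\<forall>s<n. (\<Sum>j<n. P s j * cc j) = 0" using cc(2) True split by (simp add: mult.commute)
    have "(\<Sum>i<n. \<Sum>j<n. P i j * cc i * cc j) = (\<Sum>i<n. cc i * (\<Sum>j<n. P i j * cc j))"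
      by (simp add: sum_distrib_left algebra_simps)
    also have "\<dots> = 0" using z by simp
    finally have "(\<Sum>i<n. \<Sum>j<n. P i j * cc i * cc j) = 0" .
    moreover have "(\<Sum>i<n. \<Sum>j<n. P i j * cc i * cc j) > 0"
    proof -
      have pd: "\<forall>x::nat\<Rightarrow>real. (\<exists>i<n. x i \<noteq> 0) \<longrightarrow> (\<Sum>i<n. \<Sum>j<n. P i j * x i * x j) > 0"
        using assms unfolding pos_def_matrix_def by (rule conjunct2)
      have ex: "\<exists>i<n. cc i \<noteq> 0" using j0 by blast
      show ?thesis by (rule pd[rule_format, OF ex])
    qed
    ultimately show ?thesis by simp
  next
    case False
    have "\<forall>s<n. x s = (\<Sum>j<n. P s j * (- cc j / cc n))"
    proof (intro allI impI)
      fix s assume s: "s < n"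
      have "(\<Sum>j<n. cc j * P s j) + cc n * x s = 0" using cc(2) s split by simp
      then have "x s = - (\<Sum>j<n. cc j * P s j) / cc n" using False by (simp add: field_simps)
      also have "\<dots> = (\<Sum>j<n. P s j * (- cc j / cc n))"
        by (simp add: sum_divide_distrib sum_negf[symmetric] algebra_simps)
      finally show "x s = (\<Sum>j<n. P s j * (- cc j / cc n))" .
    qed
    then show ?thesis by (rule exI[where x="\<lambda>j. - cc j / cc n"])
  qed
qed

theorem theorem4p4:
  fixes n m :: nat and c \<alpha> :: real
  assumes "n \<ge> 2" and "c > 0" and "\<alpha> > 0"
    and "pos_def_matrix n (hadamard_pow_matrix (gen_hilbert_matrix c) \<alpha>)"
    and "m \<ge> 2"
  shows "strongly_completely_positive m n (hadamard_pow_tensor (gen_hilbert_tensor c) \<alpha>)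
       \<and> (even m \<longrightarrow> pos_def_tensor m n (hadamard_pow_tensor (gen_hilbert_tensor c) \<alpha>))"
proof -
  define N where "N = m * (n - 1)"
  obtain W T :: "nat \<Rightarrow> real" where WT: "\<forall>k<Suc N. W k \<ge> 0 \<and> 0 \<le> T k \<and> T k \<le> 1"
     and rep: "\<forall>s\<le>N. EE c 0 \<alpha> (real s) = (\<Sum>k<Suc N. W k * T k ^ s)"
    using moment_repr[OF assms(2,3), of N] by blast
  define A where "A = hadamard_pow_tensor (gen_hilbert_tensor c) \<alpha>"
  have hE: "(1 / (real s + c)) powr \<alpha> = EE c 0 \<alpha> (real s)" for s
    by (simp add: powr_divide powr_minus_divide)
  have Aval: "A xs = EE c 0 \<alpha> (real (sum_list xs))" for xs
    unfolding A_def hadamard_pow_tensor_def gen_hilbert_tensor_def using hE by simp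
  define u where "u = (\<lambda>k i. root m (W k) * T k ^ i)"
  have m0: "m > 0" using assms(5) by simp
  have tpv: "tensor_power_vec (u k) xs = W k * T k ^ sum_list xs" if "k < Suc N" "length xs = m" for k xs
    unfolding tensor_power_vec_def u_def prod_geom using that WT m0 by simp
  have Arep: "\<forall>xs\<in>tensor_indices m n. A xs = (\<Sum>k<Suc N. tensor_power_vec (u k) xs)"
  proof
    fix xs assume xs: "xs \<in> tensor_indices m n"
    then have len: "length xs = m" and bd: "\<forall>i\<in>set xs. i < n" by (auto simp: tensor_indices_def)
    have "sum_list xs \<le> N" using sum_list_bound[OF bd] len unfolding N_def by simp
    then show "A xs = (\<Sum>k<Suc N. tensor_power_vec (u k) xs)" using rep Aval tpv len by simp
  qed
  have sym: "symmetric_tensor m n A"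
    unfolding symmetric_tensor_def
  proof (intro ballI allI impI)
    fix xs ys :: "nat list" assume "mset ys = mset xs"
    then have "sum_list ys = sum_list xs" by (metis sum_mset_sum_list)
    then show "A ys = A xs" by (simp add: Aval)
  qed
  have unn: "\<forall>k<Suc N. \<forall>i<n. u k i \<ge> 0" using WT by (auto simp: u_def intro!: mult_nonneg_nonneg real_root_ge_zero)
  have span: "\<forall>x::nat \<Rightarrow> real. \<exists>t. \<forall>i<n. x i = (\<Sum>k<Suc N. t k * u k i)"
  proof
    fix x :: "nat \<Rightarrow> real"
    let ?P = "hadamard_pow_matrix (gen_hilbert_matrix c) \<alpha>"
    obtain y where y: "\<forall>s<n. x s = (\<Sum>j<n. ?P s j * y j)" using pd_surj[OF assms(4)] by blast
    have Pval: "?P s j = (\<Sum>k<Suc N. W k * T k ^ (s + j))" if "s < n" "j < n" for s j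
    proof -
      have "s + j \<le> 2 * (n - 1)" using that by simp
      also have "\<dots> \<le> N" unfolding N_def using assms(5) by (intro mult_right_mono) auto
      finally have sj: "s + j \<le> N" .
      have e: "?P s j = EE c 0 \<alpha> (real (s + j))"
        unfolding hadamard_pow_matrix_def gen_hilbert_matrix_def using hE[of "s + j"] by simp
      show ?thesis by (rule trans[OF e rep[rule_format, OF sj]])
    qed
    define t where "t = (\<lambda>k. (\<Sum>j<n. y j * T k ^ j) * (if W k = 0 then 0 else W k / root m (W k)))"
    have tu: "t k * root m (W k) = (\<Sum>j<n. y j * T k ^ j) * W k" if "k < Suc N" for k
    proof (cases "W k = 0")
      case True then show ?thesis by (simp add: t_def)
    next
      case False
      then have "root m (W k) > 0" using WT that m0 by (intro real_root_gt_zero) auto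
      then show ?thesis unfolding t_def using False by simp
    qed
    have "\<forall>i<n. x i = (\<Sum>k<Suc N. t k * u k i)"
    proof (intro allI impI)
      fix i assume i: "i < n"
      have "(\<Sum>k<Suc N. t k * u k i) = (\<Sum>k<Suc N. (\<Sum>j<n. y j * T k ^ j) * W k * T k ^ i)"
      proof (intro sum.cong refl)
        fix k assume "k \<in> {..<Suc N}"
        then have "t k * root m (W k) = (\<Sum>j<n. y j * T k ^ j) * W k" using tu by simp
        then show "t k * u k i = (\<Sum>j<n. y j * T k ^ j) * W k * T k ^ i"
          unfolding u_def by (metis mult.assoc)
      qed
      also have "\<dots> = (\<Sum>k<Suc N. \<Sum>j<n. y j * (W k * T k ^ (i + j)))"
      proof (intro sum.cong refl)
        fix k
        have "(\<Sum>j<n. y j * T k ^ j) * W k * T k ^ i = (\<Sum>j<n. y j * T k ^ j * W k * T k ^ i)"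
          by (simp add: sum_distrib_right)
        also have "\<dots> = (\<Sum>j<n. y j * (W k * T k ^ (i + j)))"
          by (intro sum.cong refl) (simp add: power_add algebra_simps)
        finally show "(\<Sum>j<n. y j * T k ^ j) * W k * T k ^ i = (\<Sum>j<n. y j * (W k * T k ^ (i + j)))" .
      qed
      also have "\<dots> = (\<Sum>j<n. y j * (\<Sum>k<Suc N. W k * T k ^ (i + j)))"
        by (subst sum.swap) (simp only: sum_distrib_left)
      also have "\<dots> = (\<Sum>j<n. ?P i j * y j)" using Pval i by (simp add: mult.commute)
      also have "\<dots> = x i" using y i by simp
      finally show "x i = (\<Sum>k<Suc N. t k * u k i)" by simp
    qed
    then show "\<exists>t. \<forall>i<n. x i = (\<Sum>k<Suc N. t k * u k i)" by (rule exI[where x=t])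
  qed
  have scp: "strongly_completely_positive m n A"
    unfolding strongly_completely_positive_def
    by (intro conjI sym exI[where x="Suc N"] exI[where x=u] unn span Arep)
  have pd: "even m \<longrightarrow> pos_def_tensor m n A"
  proof
    assume ev: "even m"
    have "(\<Sum>xs\<in>tensor_indices m n. A xs * prod_list (map x xs)) > 0" if nz: "\<exists>i<n. x i \<noteq> 0" for x
    proof -
      have "(\<Sum>xs\<in>tensor_indices m n. A xs * prod_list (map x xs))
          = (\<Sum>xs\<in>tensor_indices m n. \<Sum>k<Suc N. prod_list (map (\<lambda>i. u k i * x i) xs))"
      proof (intro sum.cong refl)
        fix xs assume "xs \<in> tensor_indices m n"
        then have "A xs = (\<Sum>k<Suc N. tensor_power_vec (u k) xs)" using Arep by blast
        then show "A xs * prod_list (map x xs) = (\<Sum>k<Suc N. prod_list (map (\<lambda>i. u k i * x i) xs))"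
          by (simp only: sum_distrib_right tensor_power_vec_def prod_list_map_mult)
      qed
      also have "\<dots> = (\<Sum>k<Suc N. (\<Sum>i<n. u k i * x i) ^ m)"
        by (subst sum.swap) (simp add: tensor_sum)
      also have "\<dots> > 0"
      proof -
        obtain tt where tt: "\<forall>i<n. x i = (\<Sum>k<Suc N. tt k * u k i)" using span by blast
        have "\<exists>k<Suc N. (\<Sum>i<n. u k i * x i) \<noteq> 0"
        proof (rule ccontr)
          assume "\<not> (\<exists>k<Suc N. (\<Sum>i<n. u k i * x i) \<noteq> 0)"
          then have z: "\<forall>k<Suc N. (\<Sum>i<n. u k i * x i) = 0" by auto
          have "(\<Sum>i<n. x i * x i) = (\<Sum>i<n. \<Sum>k<Suc N. tt k * u k i * x i)"
          proof (intro sum.cong refl)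
            fix i assume "i \<in> {..<n}"
            then have xi: "x i = (\<Sum>k<Suc N. tt k * u k i)" using tt by blast
            show "x i * x i = (\<Sum>k<Suc N. tt k * u k i * x i)"
              by (subst (1) xi) (simp only: sum_distrib_right)
          qed
          also have "\<dots> = (\<Sum>k<Suc N. tt k * (\<Sum>i<n. u k i * x i))"
            by (subst sum.swap) (simp add: sum_distrib_left mult.assoc)
          also have "\<dots> = 0" using z by simp
          finally have "(\<Sum>i<n. x i * x i) = 0" .
          moreover from nz obtain i0 where "i0 < n" "x i0 \<noteq> 0" by blast
          then have "(\<Sum>i<n. x i * x i) > 0" by (intro sum_pos2[of _ i0]) (auto simp: zero_less_mult_iff)
          ultimately show False by simp
        qed
        then obtain k0 where k0: "k0 < Suc N" "(\<Sum>i<n. u k0 i * x i) \<noteq> 0" by blast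
        show ?thesis
          using k0 ev by (intro sum_pos2[of _ k0]) (auto simp: zero_less_power_eq zero_le_even_power)
      qed
      finally show ?thesis .
    qed
    then show "pos_def_tensor m n A" unfolding pos_def_tensor_def using sym by blast
  qed
  show ?thesis using scp pd unfolding A_def by blast
qed

end
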